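(* Let $M=p_1^{n_1}\cdots p_K^{n_K}$ with distinct primes $p_\nu$ and $n_\nu\in\mathbb{N}$, and $R=\{r\in\mathbb{Z}_M:(r,M)=1\}$. For $\nu=1,\dots,K$, let $x_\nu,x'_\nu\in\mathbb{Z}_M$ with $(x_\nu,M)=(x'_\nu,M)=M/p_\nu^{\alpha_\nu}$, where $\alpha_1,\dots,\alpha_K\ge1$. Then there exists $r\in R$ such that $rx_\nu=x'_\nu$ for all $\nu=1,\dots,K$.
   Context: $(x,M)$ denotes $\gcd(x,M)$ for $x\in\mathbb{Z}_M$. *)

theory Defs
  imports "HOL-Number_Theory.Number_Theory"
begin

end

theory Submission
  imports Defs
begin

lemma local_step:
  fixes M d q xx yy :: nat
  assumes Md: "M = d * q" and q: "q > 0" and d: "d > 0"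
    and gx: "gcd xx M = d" and gy: "gcd yy M = d"
  shows "\<exists>s. coprime s q \<and> [s * xx = yy] (mod M)"
proof -
  have "d dvd xx" using gx by (metis gcd_dvd1)
  then obtain u where u: "xx = d * u" by (auto elim: dvdE)
  have "d dvd yy" using gy by (metis gcd_dvd1)
  then obtain v where v: "yy = d * v" by (auto elim: dvdE)
  have "gcd xx M = d * gcd u q" using u Md by (simp add: gcd_mult_left)
  hence "d * gcd u q = d * 1" using gx by (simp only: mult_1_right)
  hence "gcd u q = 1" by (simp only: nat_mult_eq_cancel1[OF d])
  hence cu: "coprime u q" by (rule coprime_iff_gcd_eq_1[THEN iffD2])
  have "gcd yy M = d * gcd v q" using v Md by (simp add: gcd_mult_left)
  hence "d * gcd v q = d * 1" using gy by (simp only: mult_1_right)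
  hence "gcd v q = 1" by (simp only: nat_mult_eq_cancel1[OF d])
  hence cv: "coprime v q" by (rule coprime_iff_gcd_eq_1[THEN iffD2])
  obtain w where w: "[u * w = Suc 0] (mod q)" using cong_solve_coprime_nat[OF cu] by blast
  define s where "s = w * v"
  have c1: "[s * u = v] (mod q)"
  proof -
    have "[s * u = (u * w) * v] (mod q)" by (simp add: s_def mult.commute mult.left_commute)
    moreover have "[(u * w) * v = Suc 0 * v] (mod q)" using w by (rule cong_mult[OF _ cong_refl])
    ultimately show ?thesis using cong_trans by fastforce
  qed
  have cs: "coprime s q"
  proof -
    have "coprime (s*u) q" using cong_imp_coprime[OF cong_sym[OF c1] cv] .
    thus ?thesis by simp
  qed
  have "(d * (s*u)) mod (d*q) = (d * v) mod (d*q)"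
    using c1 by (simp add: cong_def mod_mult_mult1)
  hence "[s * xx = yy] (mod M)" using u v Md by (simp add: cong_def mult.left_commute)
  thus ?thesis using cs by blast
qed

theorem lemma3p6:
  fixes M K :: nat and p n \<alpha> :: "nat \<Rightarrow> nat" and x x' :: "nat \<Rightarrow> nat"
  assumes primes: "\<And>\<nu>. \<nu> \<in> {1..K} \<Longrightarrow> prime (p \<nu>)"
    and distinct: "inj_on p {1..K}"
    and exps: "\<And>\<nu>. \<nu> \<in> {1..K} \<Longrightarrow> n \<nu> \<ge> 1"
    and M_def: "M = (\<Prod>\<nu>\<in>{1..K}. p \<nu> ^ n \<nu>)"
    and x_range: "\<And>\<nu>. \<nu> \<in> {1..K} \<Longrightarrow> x \<nu> < M \<and> x' \<nu> < M"
    and alpha_ge: "\<And>\<nu>. \<nu> \<in> {1..K} \<Longrightarrow> \<alpha> \<nu> \<ge> 1"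
    and alpha_dvd: "\<And>\<nu>. \<nu> \<in> {1..K} \<Longrightarrow> p \<nu> ^ \<alpha> \<nu> dvd M"
    and gcd_x: "\<And>\<nu>. \<nu> \<in> {1..K} \<Longrightarrow> gcd (x \<nu>) M = M div p \<nu> ^ \<alpha> \<nu>"
    and gcd_x': "\<And>\<nu>. \<nu> \<in> {1..K} \<Longrightarrow> gcd (x' \<nu>) M = M div p \<nu> ^ \<alpha> \<nu>"
  shows "\<exists>r. r < M \<and> coprime r M \<and> (\<forall>\<nu>\<in>{1..K}. [r * x \<nu> = x' \<nu>] (mod M))"
proof -
  have Mpos: "M > 0" unfolding M_def
    using primes by (simp add: prime_gt_0_nat)
  have ex: "\<forall>\<nu>\<in>{1..K}. \<exists>s. coprime s (p \<nu> ^ \<alpha> \<nu>) \<and> [s * x \<nu> = x' \<nu>] (mod M)"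
  proof
    fix \<nu> assume h: "\<nu> \<in> {1..K}"
    let ?q = "p \<nu> ^ \<alpha> \<nu>"
    have qpos: "?q > 0" using primes[OF h] by (simp add: prime_gt_0_nat)
    have Md: "M = (M div ?q) * ?q" using alpha_dvd[OF h] by simp
    have dpos: "M div ?q > 0" using alpha_dvd[OF h] Mpos qpos by (simp add: dvd_imp_le div_greater_zero_iff)
    show "\<exists>s. coprime s ?q \<and> [s * x \<nu> = x' \<nu>] (mod M)"
      by (rule local_step[OF Md qpos dpos gcd_x[OF h] gcd_x'[OF h]])
  qed
  obtain s where s0: "\<forall>\<nu>\<in>{1..K}. coprime (s \<nu>) (p \<nu> ^ \<alpha> \<nu>) \<and> [s \<nu> * x \<nu> = x' \<nu>] (mod M)"
    using bchoice[OF ex] by (elim exE)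
  have s: "coprime (s \<nu>) (p \<nu> ^ \<alpha> \<nu>) \<and> [s \<nu> * x \<nu> = x' \<nu>] (mod M)" if "\<nu>\<in>{1..K}" for \<nu>
    using s0 that by blast
  have cop: "\<forall>i\<in>{1..K}. \<forall>j\<in>{1..K}. i \<noteq> j \<longrightarrow> coprime (p i ^ \<alpha> i) (p j ^ \<alpha> j)"
  proof (intro ballI impI)
    fix i j assume ij: "i \<in> {1..K}" "j \<in> {1..K}" "i \<noteq> j"
    have ne: "p i \<noteq> p j" using inj_onD[OF distinct _ ij(1) ij(2)] ij(3) by blast
    have "coprime (p i) (p j)" using primes_coprime[OF primes[OF ij(1)] primes[OF ij(2)] ne] .
    thus "coprime (p i ^ \<alpha> i) (p j ^ \<alpha> j)" by (simp only: coprime_power_left_iff coprime_power_right_iff simp_thms)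
  qed
  obtain r0 where r0: "\<And>\<nu>. \<nu>\<in>{1..K} \<Longrightarrow> [r0 = s \<nu>] (mod p \<nu> ^ \<alpha> \<nu>)"
    using chinese_remainder_nat[OF finite_atLeastAtMost cop, of s] by blast
  define r where "r = r0 mod M"
  have rlt: "r < M" using Mpos by (simp add: r_def)
  have rcong: "[r = s \<nu>] (mod p \<nu> ^ \<alpha> \<nu>)" if h: "\<nu>\<in>{1..K}" for \<nu>
  proof -
    have "[r = r0] (mod M)" by (simp add: r_def cong_def)
    hence "[r = r0] (mod p \<nu> ^ \<alpha> \<nu>)" using alpha_dvd[OF h] cong_dvd_modulus_nat by blast
    thus ?thesis using r0[OF h] cong_trans by blast
  qed
  have rcop: "coprime r (p \<nu>)" if h: "\<nu>\<in>{1..K}" for \<nu>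
  proof -
    have "coprime (s \<nu>) (p \<nu> ^ \<alpha> \<nu>)" using s[OF h] by blast
    hence "coprime r (p \<nu> ^ \<alpha> \<nu>)" using cong_imp_coprime[OF cong_sym[OF rcong[OF h]]] by blast
    thus ?thesis by (simp only: coprime_power_right_iff) (use alpha_ge[OF h] in linarith)
  qed
  have "coprime r M" unfolding M_def
  proof (rule prod_coprime_right)
    fix i assume "i \<in> {1..K}"
    thus "coprime r (p i ^ n i)" using rcop coprime_power_right_iff by blast
  qed
  moreover have "[r * x \<nu> = x' \<nu>] (mod M)" if h: "\<nu>\<in>{1..K}" for \<nu>
  proof -
    let ?q = "p \<nu> ^ \<alpha> \<nu>"
    have Md: "M = (M div ?q) * ?q" using alpha_dvd[OF h] by simp
    have "M div ?q dvd x \<nu>" using gcd_dvd1[of "x \<nu>" M] gcd_x[OF h] by simp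
    then obtain u where u: "x \<nu> = (M div ?q) * u" by (auto elim: dvdE)
    have "[r * u = s \<nu> * u] (mod ?q)" using rcong[OF h] by (rule cong_mult[OF _ cong_refl])
    hence "(M div ?q * (r*u)) mod (M div ?q * ?q) = (M div ?q * (s \<nu> * u)) mod (M div ?q * ?q)"
      by (simp add: cong_def mod_mult_mult1)
    hence "[r * x \<nu> = s \<nu> * x \<nu>] (mod M)" using u Md
      by (simp add: cong_def mult.left_commute)
    thus ?thesis using s[OF h] cong_trans by blast
  qed
  ultimately show ?thesis using rlt by blast
qed

end
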